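(* Let $F$ be a minimally unsatisfiable clause-set and $v\neq w$ two non-1-singular variables for $F$. Let $C$ be the main clause for $v$ and $D$ the main clause for $w$. 1. If $C = D$, then $w$ is not singular for $\mathrm{DP}_v(F)$ and $v$ is not singular for $\mathrm{DP}_w(F)$. 2. If $C\neq D$, then $w$ is non-1-singular for $\mathrm{DP}_v(F)$ and $v$ is non-1-singular for $\mathrm{DP}_w(F)$.
   Context: Literals are variables $v$ and complements $\overline{v}$; a clause is a finite set of literals with no complementary pair; a clause-set is a finite set of clauses; $\mathrm{ldeg}_F(x)$ is the number of clauses of $F$ containing literal $x$. $\mathrm{DP}_v(F) := \{C \in F : v \notin \mathrm{var}(C)\} \cup \{(C \cup D)\setminus\{v,\overline{v}\} : C, D \in F,\ C \cap \overline{D} = \{v\}\}$. A variable $v$ is singular for $F$ if $\min(\mathrm{ldeg}_F(v),\mathrm{ldeg}_F(\overline{v}))=1$; it is 1-singular if $\mathrm{ldeg}_F(v)=\mathrm{ldeg}_F(\overline{v})=1$, and non-1-singular if it is singular but not 1-singular. For a non-1-singular variable $v$ the singular literal is the unique literal $x$ with underlying variable $v$ and $\mathrm{ldeg}_F(x)=1$, and the main clause is the unique clause of $F$ containing $x$. *)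

theory Defs
  imports Main
begin

datatype 'v lit = Pos 'v | Neg 'v

fun var :: "'v lit \<Rightarrow> 'v" where
  "var (Pos v) = v" | "var (Neg v) = v"

fun comp :: "'v lit \<Rightarrow> 'v lit" where
  "comp (Pos v) = Neg v" | "comp (Neg v) = Pos v"

type_synonym 'v clause = "'v lit set"

definition is_clause :: "'v clause \<Rightarrow> bool" where
  "is_clause C \<longleftrightarrow> finite C \<and> (\<forall>x\<in>C. comp x \<notin> C)"

definition is_clause_set :: "'v clause set \<Rightarrow> bool" where
  "is_clause_set F \<longleftrightarrow> finite F \<and> (\<forall>C\<in>F. is_clause C)"

definition vars_cl :: "'v clause \<Rightarrow> 'v set" where
  "vars_cl C = var ` C"

fun sat_lit :: "('v \<Rightarrow> bool) \<Rightarrow> 'v lit \<Rightarrow> bool" where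
  "sat_lit \<phi> (Pos v) = \<phi> v" | "sat_lit \<phi> (Neg v) = (\<not> \<phi> v)"

definition satisfiable :: "'v clause set \<Rightarrow> bool" where
  "satisfiable F \<longleftrightarrow> (\<exists>\<phi>. \<forall>C\<in>F. \<exists>x\<in>C. sat_lit \<phi> x)"

definition min_unsat :: "'v clause set \<Rightarrow> bool" where
  "min_unsat F \<longleftrightarrow> is_clause_set F \<and> \<not> satisfiable F \<and> (\<forall>F'. F' \<subset> F \<longrightarrow> satisfiable F')"

definition ldeg :: "'v clause set \<Rightarrow> 'v lit \<Rightarrow> nat" where
  "ldeg F x = card {C \<in> F. x \<in> C}"

definition DP :: "'v \<Rightarrow> 'v clause set \<Rightarrow> 'v clause set" where
  "DP v F = {C \<in> F. v \<notin> vars_cl C} \<union>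
     {(C \<union> D) - {Pos v, Neg v} | C D. C \<in> F \<and> D \<in> F \<and> C \<inter> comp ` D = {Pos v}}"

definition singular :: "'v clause set \<Rightarrow> 'v \<Rightarrow> bool" where
  "singular F v \<longleftrightarrow> min (ldeg F (Pos v)) (ldeg F (Neg v)) = 1"

definition one_singular :: "'v clause set \<Rightarrow> 'v \<Rightarrow> bool" where
  "one_singular F v \<longleftrightarrow> ldeg F (Pos v) = 1 \<and> ldeg F (Neg v) = 1"

definition non1_singular :: "'v clause set \<Rightarrow> 'v \<Rightarrow> bool" where
  "non1_singular F v \<longleftrightarrow> singular F v \<and> \<not> one_singular F v"

(* for non-1-singular v: the unique literal over v of degree 1 *)
definition singular_lit :: "'v clause set \<Rightarrow> 'v \<Rightarrow> 'v lit" where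
  "singular_lit F v = (THE x. var x = v \<and> ldeg F x = 1)"

definition main_clause :: "'v clause set \<Rightarrow> 'v \<Rightarrow> 'v clause" where
  "main_clause F v = (THE C. C \<in> F \<and> singular_lit F v \<in> C)"

end

theory Submission
  imports Defs
begin

lemma comp_comp[simp]: "comp (comp l) = l" by (cases l) auto
lemma var_comp[simp]: "var (comp l) = var l" by (cases l) auto
lemma comp_neq[simp]: "comp l \<noteq> l" by (cases l) auto
lemma sat_comp[simp]: "sat_lit \<phi> (comp l) = (\<not> sat_lit \<phi> l)" by (cases l) auto
lemma var_eq: "var a = var b \<Longrightarrow> a = b \<or> a = comp b" by (cases a; cases b) auto
lemma sat_upd: "var l \<noteq> u \<Longrightarrow> sat_lit (\<phi>(u:=b)) l = sat_lit \<phi> l" by (cases l) auto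
lemma lit_V: "(l \<in> {Pos v, Neg v}) = (var l = v)" by (cases l) auto
lemma vars_cl_iff: "var x = v \<Longrightarrow> (v \<in> vars_cl E) = (x \<in> E \<or> comp x \<in> E)"
proof
  assume "var x = v" "v \<in> vars_cl E"
  then obtain a where "a \<in> E" "var a = var x" unfolding vars_cl_def by auto
  then show "x \<in> E \<or> comp x \<in> E" using var_eq by blast
next
  assume "var x = v" "x \<in> E \<or> comp x \<in> E"
  then show "v \<in> vars_cl E" unfolding vars_cl_def by (metis image_eqI var_comp)
qed

lemma mu_sub:
  assumes "min_unsat F" "D \<in> F"
  obtains \<phi> where "\<forall>E\<in>F-{D}. \<exists>l\<in>E. sat_lit \<phi> l" "\<not> (\<exists>l\<in>D. sat_lit \<phi> l)"
proof -
  have "F - {D} \<subset> F" using assms by auto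
  then obtain \<phi> where p: "\<forall>E\<in>F-{D}. \<exists>l\<in>E. sat_lit \<phi> l"
    using assms unfolding min_unsat_def satisfiable_def by blast
  have "\<not> (\<exists>l\<in>D. sat_lit \<phi> l)"
  proof
    assume "\<exists>l\<in>D. sat_lit \<phi> l"
    then have "satisfiable F" using p unfolding satisfiable_def by blast
    then show False using assms unfolding min_unsat_def by blast
  qed
  then show ?thesis using that p by blast
qed

lemma clause_in: "min_unsat F \<Longrightarrow> C \<in> F \<Longrightarrow> x \<in> C \<Longrightarrow> comp x \<notin> C"
  unfolding min_unsat_def is_clause_set_def is_clause_def by blast

lemma flip:
  assumes Cx: "{E\<in>F. x\<in>E} \<subseteq> {C}"
    and sat: "\<forall>E\<in>F. comp x \<notin> E \<longrightarrow> E \<noteq> C \<longrightarrow> (\<exists>l\<in>E. sat_lit \<phi> l)"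
    and l: "l \<in> C" "l \<noteq> x" "sat_lit \<phi> l"
  shows "satisfiable F"
proof -
  obtain b where b: "sat_lit (\<phi>(var x:=b)) (comp x)" by (cases x) auto
  have "\<forall>E\<in>F. \<exists>l\<in>E. sat_lit (\<phi>(var x:=b)) l"
  proof
    fix E assume E: "E \<in> F"
    show "\<exists>l\<in>E. sat_lit (\<phi>(var x:=b)) l"
    proof (cases "comp x \<in> E")
      case True then show ?thesis using b by blast
    next
      case nc: False
      show ?thesis
      proof (cases "E = C")
        case True
        then have "var l \<noteq> var x" using l nc var_eq by blast
        then show ?thesis using l True sat_upd by metis
      next
        case False
        then obtain l' where l': "l' \<in> E" "sat_lit \<phi> l'" using sat E nc by blast
        have "x \<notin> E" using Cx E False by blast
        then have "var l' \<noteq> var x" using l' nc var_eq by blast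
        then show ?thesis using l' sat_upd by metis
      qed
    qed
  qed
  then show ?thesis unfolding satisfiable_def by blast
qed

lemma clash_only:
  assumes mu: "min_unsat F" and Cx: "{E\<in>F. x\<in>E} = {C}" and E: "E \<in> F" "comp x \<in> E"
    and z: "z \<in> C" "comp z \<in> E"
  shows "z = x"
proof (rule ccontr)
  assume ne: "z \<noteq> x"
  obtain \<phi> where p: "\<forall>E'\<in>F-{E}. \<exists>l\<in>E'. sat_lit \<phi> l" "\<not> (\<exists>l\<in>E. sat_lit \<phi> l)"
    using mu_sub[OF mu E(1)] by blast
  have "sat_lit \<phi> z" using p(2) z(2) by force
  have "satisfiable F"
    by (rule flip[of F x C \<phi> z]) (use Cx p(1) E(2) ne z(1) \<open>sat_lit \<phi> z\<close> in auto)
  then show False using mu unfolding min_unsat_def by blast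
qed

lemma res_notin:
  assumes mu: "min_unsat F" and vx: "var x = v" and C: "C \<in> F" "x \<in> C"
    and E: "E \<in> F" "comp x \<in> E"
  shows "(C \<union> E) - {Pos v, Neg v} \<notin> F"
proof
  let ?R = "(C \<union> E) - {Pos v, Neg v}"
  assume R: "?R \<in> F"
  obtain \<phi> where p: "\<forall>E'\<in>F-{?R}. \<exists>l\<in>E'. sat_lit \<phi> l" "\<not> (\<exists>l\<in>?R. sat_lit \<phi> l)"
    using mu_sub[OF mu R] by blast
  have "x \<in> {Pos v, Neg v}" using lit_V[of x v] vx by simp
  then have "x \<notin> ?R" by blast
  then have "C \<noteq> ?R" using C by blast
  then obtain a where a: "a \<in> C" "sat_lit \<phi> a" using p(1) C by blast
  have "comp x \<in> {Pos v, Neg v}" using lit_V[of "comp x" v] vx by simp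
  then have "comp x \<notin> ?R" by blast
  then have "E \<noteq> ?R" using E by blast
  then obtain b where b: "b \<in> E" "sat_lit \<phi> b" using p(1) E by blast
  have "a \<notin> ?R" using a p(2) by blast
  then have "a \<in> {Pos v, Neg v}" using a(1) by blast
  then have "var a = var x" using lit_V[of a v] vx by simp
  then have "a = x \<or> a = comp x" by (rule var_eq)
  then have "a = x" using clause_in[OF mu C] a(1) by blast
  have "b \<notin> ?R" using b p(2) by blast
  then have "b \<in> {Pos v, Neg v}" using b(1) by blast
  then have "var b = var x" using lit_V[of b v] vx by simp
  then have "b = x \<or> b = comp x" by (rule var_eq)
  then have "b = comp x" using clause_in[OF mu E(1) E(2)] b(1) by force
  show False using a b \<open>a = x\<close> \<open>b = comp x\<close> by simp
qed

lemma res_inj: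
  assumes mu: "min_unsat F" and Cx: "{E\<in>F. x\<in>E} = {C}" and vx: "var x = v"
    and E1: "E1 \<in> F" "comp x \<in> E1" and E2: "E2 \<in> F" "comp x \<in> E2"
    and eq: "(C \<union> E1) - {Pos v, Neg v} = (C \<union> E2) - {Pos v, Neg v}"
  shows "E1 = E2"
proof (rule ccontr)
  assume ne: "E1 \<noteq> E2"
  obtain \<phi> where p: "\<forall>E'\<in>F-{E1}. \<exists>l\<in>E'. sat_lit \<phi> l" "\<not> (\<exists>l\<in>E1. sat_lit \<phi> l)"
    using mu_sub[OF mu E1(1)] by blast
  obtain l where l: "l \<in> E2" "sat_lit \<phi> l" using p(1) E2 ne by blast
  have "l \<noteq> comp x" using l p(2) E1 by blast
  moreover have "l \<noteq> x" using clause_in[OF mu E2(1), of "comp x"] E2 l by auto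
  ultimately have "var l \<noteq> v" using var_eq[of l x] vx by auto
  then have "l \<notin> {Pos v, Neg v}" using lit_V[of l v] by simp
  then have "l \<in> (C \<union> E1) - {Pos v, Neg v}" using eq l by blast
  moreover have "l \<notin> E1" using l p(2) by blast
  ultimately have lC: "l \<in> C" by blast
  have "satisfiable F"
    by (rule flip[of F x C \<phi> l]) (use Cx p(1) E1(2) lC \<open>l \<noteq> x\<close> l(2) in auto)
  then show False using mu unfolding min_unsat_def by blast
qed

lemma DP_char:
  assumes mu: "min_unsat F" and Cx: "{E\<in>F. x\<in>E} = {C}" and vx: "var x = v"
  shows "DP v F = {E\<in>F. v \<notin> vars_cl E} \<union> (\<lambda>E. (C \<union> E) - {Pos v, Neg v}) ` {E\<in>F. comp x \<in> E}"
proof -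
  have C: "C \<in> F" "x \<in> C" using Cx by auto
  have "{(A \<union> B) - {Pos v, Neg v} | A B. A \<in> F \<and> B \<in> F \<and> A \<inter> comp ` B = {Pos v}}
        = (\<lambda>E. (C \<union> E) - {Pos v, Neg v}) ` {E\<in>F. comp x \<in> E}" (is "?L = ?R")
  proof
    show "?L \<subseteq> ?R"
    proof
      fix G assume "G \<in> ?L"
      then obtain A B where AB: "G = (A \<union> B) - {Pos v, Neg v}" "A \<in> F" "B \<in> F"
        "A \<inter> comp ` B = {Pos v}" by blast
      have PA: "Pos v \<in> A" using AB(4) by blast
      have "Pos v \<in> comp ` B" using AB(4) by blast
      then have NB: "Neg v \<in> B" by (metis comp.simps(1) comp_comp imageE)
      show "G \<in> ?R"
      proof (cases x)
        case (Pos u)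
        then have "x = Pos v" using vx by simp
        then have "A = C" using Cx PA AB(2) by blast
        then show ?thesis using AB NB \<open>x = Pos v\<close> by auto
      next
        case (Neg u)
        then have "x = Neg v" using vx by simp
        then have "B = C" using Cx NB AB(3) by blast
        then show ?thesis using AB PA \<open>x = Neg v\<close> by (auto simp: Un_commute)
      qed
    qed
  next
    show "?R \<subseteq> ?L"
    proof
      fix G assume "G \<in> ?R"
      then obtain E where E: "G = (C \<union> E) - {Pos v, Neg v}" "E \<in> F" "comp x \<in> E" by blast
      have cl: "\<And>z. z \<in> C \<Longrightarrow> comp z \<in> E \<Longrightarrow> z = x"
        using clash_only[OF mu Cx E(2) E(3)] by blast
      show "G \<in> ?L"
      proof (cases x)
        case (Pos u)
        then have xv: "x = Pos v" using vx by simp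
        have "C \<inter> comp ` E = {Pos v}"
        proof
          show "C \<inter> comp ` E \<subseteq> {Pos v}"
          proof
            fix z assume "z \<in> C \<inter> comp ` E"
            then have "z \<in> C" "comp z \<in> E" by auto
            then show "z \<in> {Pos v}" using cl xv by blast
          qed
          show "{Pos v} \<subseteq> C \<inter> comp ` E" using C E xv by (auto intro!: image_eqI[of _ _ "Neg v"])
        qed
        then show ?thesis using E C by blast
      next
        case (Neg u)
        then have xv: "x = Neg v" using vx by simp
        have "E \<inter> comp ` C = {Pos v}"
        proof
          show "E \<inter> comp ` C \<subseteq> {Pos v}"
          proof
            fix z assume "z \<in> E \<inter> comp ` C"
            then obtain u where "u \<in> C" "z = comp u" "z \<in> E" by auto
            then have "u = x" using cl by auto
            then show "z \<in> {Pos v}" using \<open>z = comp u\<close> xv by simp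
          qed
          show "{Pos v} \<subseteq> E \<inter> comp ` C" using C E xv by (auto intro!: image_eqI[of _ _ "Neg v"])
        qed
        moreover have "G = (E \<union> C) - {Pos v, Neg v}" using E by (simp add: Un_commute)
        ultimately show ?thesis using E C by blast
      qed
    qed
  qed
  then show ?thesis unfolding DP_def by simp
qed

lemma card_DP_lit:
  assumes mu: "min_unsat F" and Cx: "{E\<in>F. x\<in>E} = {C}" and vx: "var x = v"
    and vl: "var l \<noteq> v"
  shows "ldeg (DP v F) l = card {E\<in>F. v \<notin> vars_cl E \<and> l \<in> E}
     + card {E\<in>F. comp x \<in> E \<and> l \<in> C \<union> E}"
proof -
  let ?g = "\<lambda>E. (C \<union> E) - {Pos v, Neg v}"
  let ?A = "{E\<in>F. v \<notin> vars_cl E \<and> l \<in> E}"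
  let ?B = "{E\<in>F. comp x \<in> E \<and> l \<in> C \<union> E}"
  have fin: "finite F" using mu unfolding min_unsat_def is_clause_set_def by blast
  have "l \<notin> {Pos v, Neg v}" using lit_V[of l v] vl by simp
  then have lg: "\<And>E. (l \<in> ?g E) = (l \<in> C \<union> E)" by blast
  have eq: "{G \<in> DP v F. l \<in> G} = ?A \<union> ?g ` ?B"
    unfolding DP_char[OF mu Cx vx] using lg by auto
  have C: "C \<in> F" "x \<in> C" using Cx by auto
  have disj: "?A \<inter> ?g ` ?B = {}" using res_notin[OF mu vx C] by blast
  have inj: "inj_on ?g ?B" unfolding inj_on_def using res_inj[OF mu Cx vx] by blast
  have "card {G \<in> DP v F. l \<in> G} = card ?A + card (?g ` ?B)"
    unfolding eq by (rule card_Un_disjoint) (use fin disj in auto)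
  also have "card (?g ` ?B) = card ?B" using card_image[OF inj] .
  finally show ?thesis unfolding ldeg_def .
qed

lemma core:
  assumes mu: "min_unsat F" and vx: "var x = v" and vy: "var y = w" and vw: "v \<noteq> w"
    and Cx: "{E\<in>F. x\<in>E} = {C}" and Dy: "{E\<in>F. y\<in>E} = {D}"
    and dx: "ldeg F (comp x) \<ge> 2" and dy: "ldeg F (comp y) \<ge> 2"
  shows "ldeg (DP v F) (comp y) \<ge> 2 \<and> (C = D \<longrightarrow> ldeg (DP v F) y \<ge> 2)
       \<and> (C \<noteq> D \<longrightarrow> ldeg (DP v F) y = 1)"
proof -
  have fin: "finite F" using mu unfolding min_unsat_def is_clause_set_def by blast
  have C: "C \<in> F" "x \<in> C" and D: "D \<in> F" "y \<in> D" using Cx Dy by auto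
  have ncx: "comp x \<notin> C" using clause_in[OF mu C] .
  have vyv: "var y \<noteq> v" "var (comp y) \<noteq> v" using vx vy vw by auto
  have cx2: "card {E\<in>F. comp x \<in> E} \<ge> 2" using dx unfolding ldeg_def .
  have vc: "\<And>E. (v \<in> vars_cl E) = (x \<in> E \<or> comp x \<in> E)" using vars_cl_iff[OF vx] .
  note cd = card_DP_lit[OF mu Cx vx]
  have P1: "ldeg (DP v F) (comp y) \<ge> 2"
  proof (cases "comp y \<in> C")
    case True
    then have "{E\<in>F. comp x \<in> E \<and> comp y \<in> C \<union> E} = {E\<in>F. comp x \<in> E}" by auto
    then show ?thesis using cd[OF vyv(2)] cx2 by simp
  next
    case False
    let ?A = "{E\<in>F. v \<notin> vars_cl E \<and> comp y \<in> E}"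
    let ?B = "{E\<in>F. comp x \<in> E \<and> comp y \<in> C \<union> E}"
    have nx: "\<And>E. E \<in> F \<Longrightarrow> comp y \<in> E \<Longrightarrow> x \<notin> E" using Cx False by blast
    have "{E\<in>F. comp y \<in> E} = ?A \<union> ?B" using nx False vc by auto
    moreover have "?A \<inter> ?B = {}" using vc False by auto
    ultimately have "card {E\<in>F. comp y \<in> E} = card ?A + card ?B"
      using fin by (simp add: card_Un_disjoint)
    then show ?thesis using cd[OF vyv(2)] dy unfolding ldeg_def by simp
  qed
  have P2: "C = D \<longrightarrow> ldeg (DP v F) y \<ge> 2"
  proof
    assume "C = D"
    then have yC: "y \<in> C" using D by simp
    have "{E\<in>F. comp x \<in> E \<and> y \<in> C \<union> E} = {E\<in>F. comp x \<in> E}" using yC by auto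
    then show "ldeg (DP v F) y \<ge> 2" using cd[OF vyv(1)] cx2 by simp
  qed
  have P3: "C \<noteq> D \<longrightarrow> ldeg (DP v F) y = 1"
  proof
    assume ne: "C \<noteq> D"
    have yC: "y \<notin> C" using Dy C ne by blast
    have xD: "x \<notin> D" using Cx D ne by blast
    let ?A = "{E\<in>F. v \<notin> vars_cl E \<and> y \<in> E}"
    let ?B = "{E\<in>F. comp x \<in> E \<and> y \<in> C \<union> E}"
    show "ldeg (DP v F) y = 1"
    proof (cases "comp x \<in> D")
      case True
      have A0: "?A = {}" using Dy vc True by auto
      have B0: "?B = {D}" using Dy yC True D by auto
      have "card ?A = 0" "card ?B = 1" by (simp_all only: A0 B0 card.empty) simp
      then show ?thesis using cd[OF vyv(1)] by linarith
    next
      case False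
      have A0: "?A = {D}" using Dy vc False xD D by auto
      have B0: "?B = {}" using Dy yC False by auto
      have "card ?A = 1" "card ?B = 0" by (simp_all only: A0 B0 card.empty) simp
      then show ?thesis using cd[OF vyv(1)] by linarith
    qed
  qed
  show ?thesis using P1 P2 P3 by blast
qed

lemma sing_iff: "var y = w \<Longrightarrow> singular G w = (min (ldeg G y) (ldeg G (comp y)) = 1)"
  unfolding singular_def by (cases y) (auto simp: min.commute)

lemma one_sing_iff: "var y = w \<Longrightarrow> one_singular G w = (ldeg G y = 1 \<and> ldeg G (comp y) = 1)"
  unfolding one_singular_def by (cases y) auto

lemma get_sing:
  assumes mu: "min_unsat F" and ns: "non1_singular F v"
  obtains x C where "var x = v" "{E\<in>F. x\<in>E} = {C}" "ldeg F (comp x) \<ge> 2"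
    "main_clause F v = C"
proof -
  obtain x where x: "var x = v" "ldeg F x = 1" "ldeg F (comp x) \<ge> 2"
  proof (cases "ldeg F (Pos v) = 1")
    case True
    then have "ldeg F (Neg v) \<ge> 2" using ns unfolding non1_singular_def singular_def one_singular_def
      by (auto simp: min_def split: if_splits)
    then show ?thesis using that[of "Pos v"] True by simp
  next
    case False
    then have "ldeg F (Neg v) = 1" "ldeg F (Pos v) \<ge> 2" using ns unfolding non1_singular_def singular_def one_singular_def
      by (auto simp: min_def split: if_splits)
    then show ?thesis using that[of "Neg v"] by simp
  qed
  obtain C where Cx: "{E\<in>F. x\<in>E} = {C}" using x(2) unfolding ldeg_def by (meson card_1_singletonE)
  have sl: "singular_lit F v = x" unfolding singular_lit_def
  proof (rule the_equality)
    show "var x = v \<and> ldeg F x = 1" using x by simp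
    fix z assume "var z = v \<and> ldeg F z = 1"
    then show "z = x" using var_eq[of z x] x by auto
  qed
  have "main_clause F v = C" unfolding main_clause_def sl
    by (rule the_equality) (use Cx in auto)
  then show ?thesis using that x(1,3) Cx by blast
qed

theorem lemma37:
  fixes F :: "'v clause set" and v w :: 'v
  assumes "min_unsat F"
    and "v \<noteq> w"
    and "non1_singular F v" and "non1_singular F w"
  shows "(main_clause F v = main_clause F w \<longrightarrow>
            \<not> singular (DP v F) w \<and> \<not> singular (DP w F) v)
       \<and> (main_clause F v \<noteq> main_clause F w \<longrightarrow>
            non1_singular (DP v F) w \<and> non1_singular (DP w F) v)"
proof -
  obtain x C where x: "var x = v" "{E\<in>F. x\<in>E} = {C}" "ldeg F (comp x) \<ge> 2"
    "main_clause F v = C" using get_sing[OF assms(1,3)] by blast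
  obtain y D where y: "var y = w" "{E\<in>F. y\<in>E} = {D}" "ldeg F (comp y) \<ge> 2"
    "main_clause F w = D" using get_sing[OF assms(1,4)] by blast
  note c1 = core[OF assms(1) x(1) y(1) assms(2) x(2) y(2) x(3) y(3)]
  note c2 = core[OF assms(1) y(1) x(1) assms(2)[symmetric] y(2) x(2) y(3) x(3)]
  have a1: "\<And>a b::nat. b \<ge> 2 \<Longrightarrow> a \<ge> 2 \<Longrightarrow> min a b \<noteq> 1" by (simp add: min_def)
  have a2: "\<And>a b::nat. b \<ge> 2 \<Longrightarrow> a = 1 \<Longrightarrow> min a b = 1 \<and> \<not> (a = 1 \<and> b = 1)"
    by (simp add: min_def)
  show ?thesis
  proof (intro conjI impI)
    assume "main_clause F v = main_clause F w"
    then have "C = D" using x(4) y(4) by simp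
    then show "\<not> singular (DP v F) w" "\<not> singular (DP w F) v"
      unfolding sing_iff[OF x(1)] sing_iff[OF y(1)] using c1 c2 a1 by metis+
  next
    assume "main_clause F v \<noteq> main_clause F w"
    then have "C \<noteq> D" using x(4) y(4) by simp
    then show "non1_singular (DP v F) w" "non1_singular (DP w F) v"
      unfolding non1_singular_def sing_iff[OF x(1)] sing_iff[OF y(1)]
        one_sing_iff[OF x(1)] one_sing_iff[OF y(1)] using c1 c2 a2 by metis+
  qed
qed

end
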